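(* Let $(\mathcal{T}^h,\Sigma^h)$ be a fixed non-degenerate tessellation and let $\{\rho^\epsilon\}_{\epsilon>0}\subset\mathcal{P}(\mathcal{T}^h)$ with $\rho^\epsilon\rightharpoonup\rho$ in $\mathcal{P}(\mathcal{T}^h)$ as $\epsilon\to0$. Then \[ \lim_{\epsilon\to0}\mathcal{D}_{\epsilon,h}(\rho^\epsilon)=\mathcal{D}_{\mathrm{up},h}(\rho)=2\sum_{(K,L)\in\Sigma^h}\tau_{K|L}\,\alpha^*_0\Big(u_K,u_L,\frac{q_{K|L}}2\Big),\qquad \alpha^*_0(a,b,q)=\frac12\big(a(q^+)^2+b(q^-)^2\big), \] where $u_K=\rho_K/|K|$ and $q_{K|L}$ is computed from the limit $\rho$.
   Context: Tessellation $(\mathcal{T}^h,\Sigma^h)$ of a bounded convex open $\Omega\subset\mathbb{R}^d$: mutually disjoint open convex cells, $\Sigma^h$ ordered pairs sharing a face $(K|L)$ of positive $\mathcal{H}^{d-1}$-measure, $x_K$ barycenter, $\tau_{K|L}=|(K|L)|/|x_L-x_K|$; non-degenerate (some $\zeta\in(0,1)$ with $B(x_K,\zeta h)\subset K$, $|(K|L)|\ge\zeta h^{d-1}$). $V\in\mathrm{Lip}\cap C^1(\mathbb{R}^d)$ bounded below, $W\ge0$ symmetric with $W\in\mathrm{Lip}(\mathbb{R}^d)\cap C^1(\mathbb{R}^d\setminus\{0\})$; for $\rho\in\mathcal{P}(\mathcal{T}^h)$: $u_K=\rho_K/|K|$, $q_{K|L}=V(x_L)-V(x_K)+\sum_M\rho_M(W(x_L-x_M)-W(x_K-x_M))$;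 $x^\pm\ge0$ the positive/negative parts. $\Lambda(s,t)=\frac{s-t}{\log s-\log t}$, $\Lambda_H(s,t)=st/\Lambda(s,t)$; $\alpha^*_\epsilon(a,b,\xi)=\epsilon\int_0^\xi\sinh(x/\epsilon)\Lambda_H(ae^{-x/\epsilon},be^{x/\epsilon})\mathrm{d}x$; $\beta_\epsilon(a,b)=\alpha^*_\epsilon(a,b,-\epsilon\log\sqrt{b/a})$ (extended continuously when $a$ or $b$ is $0$); $\mathfrak h(s)=\frac14\frac{e^s-1-s}{\sinh^2(s/2)}$, $\mathbb{h}_\epsilon(a,b,q)=\int_0^1[a\mathfrak h(\lambda q/\epsilon)+b\mathfrak h(-\lambda q/\epsilon)](1-\lambda)\mathrm{d}\lambda$. The discrete Fisher information is $\mathcal{D}_{\epsilon,h}(\rho)=2\sum_{\Sigma^h}\beta_\epsilon(u_K,u_L)\tau_{K|L}+\frac\epsilon2\sum_{\Sigma^h}(u_L-u_K)q_{K|L}\tau_{K|L}+\frac12\sum_{\Sigma^h}|q_{K|L}|^2\mathbb{h}_\epsilon(u_K,u_L,q_{K|L})\tau_{K|L}$ (which equals $2\sum_{\Sigma^h}\tau_{K|L}\alpha^*_\epsilon(u_K,u_L,\xi_{K|L}/2)$ with $\xi_{K|L}=\epsilon\log(u_K/u_L)-q_{K|L}$). *)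

theory Defs
  imports "HOL-Analysis.Analysis"
begin

definition omega_vol :: "nat \<Rightarrow> real" where
  "omega_vol s = pi powr (real s / 2) / Gamma (real s / 2 + 1)"

text \<open>The s-dimensional Hausdorff measure, normalised as usual
 (with the convention (diam C)^0 = 1 for nonempty C).\<close>
definition hausdorff_pre :: "nat \<Rightarrow> real \<Rightarrow> 'a::metric_space set \<Rightarrow> ennreal" where
  "hausdorff_pre s \<delta> A =
     (INF C \<in> {C :: nat \<Rightarrow> 'a set. A \<subseteq> (\<Union>i. C i) \<and> (\<forall>i. diameter (C i) \<le> \<delta>)}.
        (\<Sum>i. ennreal (if C i = {} then 0 else omega_vol s * (diameter (C i) / 2) ^ s)))"

definition hausdorff_measure :: "nat \<Rightarrow> 'a::metric_space set \<Rightarrow> ennreal" where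
  "hausdorff_measure s A = (SUP \<delta> \<in> {0<..}. hausdorff_pre s \<delta> A)"

definition vol :: "'a::euclidean_space set \<Rightarrow> real" where
  "vol K = measure lebesgue K"

definition bary :: "'a::euclidean_space set \<Rightarrow> 'a" where
  "bary K = integral K (\<lambda>x. x) /\<^sub>R vol K"

definition face_meas :: "'a::euclidean_space set \<Rightarrow> 'a set \<Rightarrow> real" where
  "face_meas K L = enn2real (hausdorff_measure (DIM('a) - 1) (closure K \<inter> closure L))"

definition edges :: "'a::euclidean_space set set \<Rightarrow> ('a set \<times> 'a set) set" where
  "edges T = {(K, L). K \<in> T \<and> L \<in> T \<and> K \<noteq> L \<and>
                hausdorff_measure (DIM('a) - 1) (closure K \<inter> closure L) > 0}"

definition tau :: "'a::euclidean_space set \<Rightarrow> 'a set \<Rightarrow> real" where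
  "tau K L = face_meas K L / dist (bary L) (bary K)"

definition mesh :: "'a::euclidean_space set set \<Rightarrow> real" where
  "mesh T = Max (diameter ` T)"

definition tessellation :: "'a::euclidean_space set \<Rightarrow> 'a set set \<Rightarrow> bool" where
  "tessellation \<Omega> T \<longleftrightarrow>
     bounded \<Omega> \<and> convex \<Omega> \<and> open \<Omega> \<and> finite T \<and> T \<noteq> {} \<and>
     (\<forall>K\<in>T. open K \<and> convex K \<and> K \<noteq> {} \<and> K \<subseteq> \<Omega>) \<and>
     (\<forall>K\<in>T. \<forall>L\<in>T. K \<noteq> L \<longrightarrow> K \<inter> L = {}) \<and>
     closure \<Omega> = \<Union> (closure ` T)"

definition nondegenerate :: "'a::euclidean_space set set \<Rightarrow> bool" where
  "nondegenerate T \<longleftrightarrow>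
     (\<exists>\<zeta>. 0 < \<zeta> \<and> \<zeta> < 1 \<and>
        (\<forall>K\<in>T. ball (bary K) (\<zeta> * mesh T) \<subseteq> K) \<and>
        (\<forall>(K, L)\<in>edges T. face_meas K L \<ge> \<zeta> * mesh T ^ (DIM('a) - 1)))"

definition prob_on :: "'a set set \<Rightarrow> ('a set \<Rightarrow> real) \<Rightarrow> bool" where
  "prob_on T \<rho> \<longleftrightarrow> (\<forall>K\<in>T. 0 \<le> \<rho> K) \<and> (\<Sum>K\<in>T. \<rho> K) = 1"

definition dens :: "('a::euclidean_space set \<Rightarrow> real) \<Rightarrow> 'a set \<Rightarrow> real" where
  "dens \<rho> K = \<rho> K / vol K"

definition qKL :: "('a::euclidean_space \<Rightarrow> real) \<Rightarrow> ('a \<Rightarrow> real) \<Rightarrow> 'a set set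
                    \<Rightarrow> ('a set \<Rightarrow> real) \<Rightarrow> 'a set \<Rightarrow> 'a set \<Rightarrow> real" where
  "qKL V W T \<rho> K L = V (bary L) - V (bary K) +
     (\<Sum>M\<in>T. \<rho> M * (W (bary L - bary M) - W (bary K - bary M)))"

definition LogMean :: "real \<Rightarrow> real \<Rightarrow> real" where
  "LogMean s t = (if s = 0 \<or> t = 0 then 0 else if s = t then s else (s - t) / (ln s - ln t))"

definition LogMeanH :: "real \<Rightarrow> real \<Rightarrow> real" where
  "LogMeanH s t = (if s = 0 \<or> t = 0 then 0 else s * t / LogMean s t)"

definition alpha_star :: "real \<Rightarrow> real \<Rightarrow> real \<Rightarrow> real \<Rightarrow> real" where
  "alpha_star \<epsilon> a b \<xi> = \<epsilon> * interval_lebesgue_integral lborel (ereal 0) (ereal \<xi>)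
      (\<lambda>x. sinh (x / \<epsilon>) * LogMeanH (a * exp (- x / \<epsilon>)) (b * exp (x / \<epsilon>)))"

definition beta_pos :: "real \<Rightarrow> real \<Rightarrow> real \<Rightarrow> real" where
  "beta_pos \<epsilon> a b = alpha_star \<epsilon> a b (- \<epsilon> * ln (sqrt (b / a)))"

definition beta :: "real \<Rightarrow> real \<Rightarrow> real \<Rightarrow> real" where
  "beta \<epsilon> a b = (if 0 < a \<and> 0 < b then beta_pos \<epsilon> a b
      else Lim (at (a, b) within {p. 0 < fst p \<and> 0 < snd p}) (\<lambda>p. beta_pos \<epsilon> (fst p) (snd p)))"

definition frakh :: "real \<Rightarrow> real" where
  "frakh s = (if s = 0 then 1 / 2 else (exp s - 1 - s) / (4 * (sinh (s / 2))\<^sup>2))"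

definition hh :: "real \<Rightarrow> real \<Rightarrow> real \<Rightarrow> real \<Rightarrow> real" where
  "hh \<epsilon> a b q = interval_lebesgue_integral lborel (ereal 0) (ereal 1)
      (\<lambda>t. (a * frakh (t * q / \<epsilon>) + b * frakh (- t * q / \<epsilon>)) * (1 - t))"

definition alpha0 :: "real \<Rightarrow> real \<Rightarrow> real \<Rightarrow> real" where
  "alpha0 a b q = (a * (max q 0)\<^sup>2 + b * (max (- q) 0)\<^sup>2) / 2"

definition D_eps :: "real \<Rightarrow> ('a::euclidean_space \<Rightarrow> real) \<Rightarrow> ('a \<Rightarrow> real) \<Rightarrow> 'a set set
                      \<Rightarrow> ('a set \<Rightarrow> real) \<Rightarrow> real" where
  "D_eps \<epsilon> V W T \<rho> =
     2 * (\<Sum>(K, L)\<in>edges T. beta \<epsilon> (dens \<rho> K) (dens \<rho> L) * tau K L)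
   + \<epsilon> / 2 * (\<Sum>(K, L)\<in>edges T. (dens \<rho> L - dens \<rho> K) * qKL V W T \<rho> K L * tau K L)
   + 1 / 2 * (\<Sum>(K, L)\<in>edges T. (qKL V W T \<rho> K L)\<^sup>2
                 * hh \<epsilon> (dens \<rho> K) (dens \<rho> L) (qKL V W T \<rho> K L) * tau K L)"

definition D_up :: "('a::euclidean_space \<Rightarrow> real) \<Rightarrow> ('a \<Rightarrow> real) \<Rightarrow> 'a set set
                      \<Rightarrow> ('a set \<Rightarrow> real) \<Rightarrow> real" where
  "D_up V W T \<rho> =
     2 * (\<Sum>(K, L)\<in>edges T. tau K L * alpha0 (dens \<rho> K) (dens \<rho> L) (qKL V W T \<rho> K L / 2))"

end

theory Submission
  imports Defs "HOL-Real_Asymp.Real_Asymp"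
begin


definition sig :: "real \<Rightarrow> real" where
  "sig w = (if w = 0 then 1 else w / sinh w)"

lemma subst1:
  fixes f :: "real \<Rightarrow> real"
  assumes e: "\<epsilon> > 0" and xi: "\<xi> \<ge> 0"
  shows "(LBINT x=ereal 0..ereal \<xi>. f x) = \<epsilon> * (LBINT w=ereal 0..ereal (\<xi>/\<epsilon>). f (\<xi> - \<epsilon>*w))"
proof -
  have ind: "indicator {0<..<\<xi>} (\<xi> - \<epsilon> * w) = (indicator {0<..<\<xi>/\<epsilon>} w :: real)" for w
    using e by (auto simp: indicator_def field_simps zero_less_mult_iff)
  have "(LBINT x=ereal 0..ereal \<xi>. f x) = (\<integral>x. indicator {0<..<\<xi>} x *\<^sub>R f x \<partial>lborel)"
    using xi by (simp add: interval_lebesgue_integral_def set_lebesgue_integral_def zero_ereal_def)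
  also have "\<dots> = \<bar>-\<epsilon>\<bar> *\<^sub>R (\<integral>w. indicator {0<..<\<xi>} (\<xi> + (-\<epsilon>) * w) *\<^sub>R f (\<xi> + (-\<epsilon>) * w) \<partial>lborel)"
    using e by (intro lborel_integral_real_affine) simp
  also have "\<dots> = \<epsilon> * (\<integral>w. indicator {0<..<\<xi>/\<epsilon>} w *\<^sub>R f (\<xi> - \<epsilon> * w) \<partial>lborel)"
    using e by (simp add: ind)
  also have "\<dots> = \<epsilon> * (LBINT w=ereal 0..ereal (\<xi>/\<epsilon>). f (\<xi> - \<epsilon>*w))"
    using e xi by (simp add: interval_lebesgue_integral_def set_lebesgue_integral_def zero_ereal_def)
  finally show ?thesis .
qed

lemma subst2:
  fixes f :: "real \<Rightarrow> real"
  assumes e: "\<epsilon> > 0" and xi: "\<xi> \<le> 0"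
  shows "(LBINT x=ereal 0..ereal \<xi>. f x) = - \<epsilon> * (LBINT w=ereal 0..ereal (-\<xi>/\<epsilon>). f (\<xi> + \<epsilon>*w))"
proof (cases "\<xi> = 0")
  case True then show ?thesis by (simp add: interval_lebesgue_integral_def einterval_same zero_ereal_def set_lebesgue_integral_def)
next
  case False
  then have xl: "\<xi> < 0" using xi by simp
  have ind: "indicator {\<xi><..<0} (\<xi> + \<epsilon> * w) = (indicator {0<..<-\<xi>/\<epsilon>} w :: real)" for w
    using e by (auto simp: indicator_def field_simps zero_less_mult_iff)
  have "(LBINT x=ereal 0..ereal \<xi>. f x) = - (\<integral>x. indicator {\<xi><..<0} x *\<^sub>R f x \<partial>lborel)"
    using xl by (simp add: interval_lebesgue_integral_def set_lebesgue_integral_def zero_ereal_def)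
  also have "\<dots> = - (\<bar>\<epsilon>\<bar> *\<^sub>R (\<integral>w. indicator {\<xi><..<0} (\<xi> + \<epsilon> * w) *\<^sub>R f (\<xi> + \<epsilon> * w) \<partial>lborel))"
    using e by (subst lborel_integral_real_affine[where c=\<epsilon> and t=\<xi>]) auto
  also have "\<dots> = - \<epsilon> * (\<integral>w. indicator {0<..<-\<xi>/\<epsilon>} w *\<^sub>R f (\<xi> + \<epsilon> * w) \<partial>lborel)"
    using e by (simp add: ind)
  also have "\<dots> = - \<epsilon> * (LBINT w=ereal 0..ereal (-\<xi>/\<epsilon>). f (\<xi> + \<epsilon>*w))"
    using e xl by (simp add: interval_lebesgue_integral_def set_lebesgue_integral_def zero_ereal_def divide_neg_pos less_imp_le)
  finally show ?thesis .
qed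

lemma LMH_exp:
  assumes c: "c > 0"
  shows "LogMeanH (c * exp w) (c * exp (-w)) = c * sig w"
proof (cases "w = 0")
  case True then show ?thesis using c by (simp add: LogMeanH_def LogMean_def sig_def)
next
  case False
  have ne: "c * exp w \<noteq> c * exp (-w)"
  proof
    assume "c * exp w = c * exp (-w)"
    then have "exp w = exp (-w)" using c by simp
    then have "w = -w" by simp
    then show False using False by simp
  qed
  have lnd: "ln (c * exp w) - ln (c * exp (-w)) = 2 * w"
    using c by (simp add: ln_mult)
  have sh: "sinh w \<noteq> 0" using False by simp
  have "LogMean (c * exp w) (c * exp (-w)) = c * (exp w - exp (-w)) / (2 * w)"
    using ne c lnd by (simp add: LogMean_def algebra_simps)
  also have "\<dots> = c * sinh w / w" using False by (simp add: sinh_def field_simps)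
  finally have LM: "LogMean (c * exp w) (c * exp (-w)) = c * sinh w / w" .
  have "LogMeanH (c * exp w) (c * exp (-w)) = c * exp w * (c * exp (-w)) / (c * sinh w / w)"
    using c by (simp add: LogMeanH_def LM)
  also have "\<dots> = c * (w / sinh w)"
    using c False sh by (simp add: field_simps exp_minus)
  finally show ?thesis using False by (simp add: sig_def)
qed

lemma sig_even: "sig (-w) = sig w"
  by (simp add: sig_def)

definition Gf :: "real \<Rightarrow> real \<Rightarrow> real" where
  "Gf x y = (LBINT w=ereal 0..ereal (ln (x/y)/2). (x*exp(-w) - y*exp w)/2 * sig w)"

lemma beta_pos_ge:
  assumes e: "\<epsilon> > 0" and ab: "b \<le> a" and b: "b > 0"
  shows "beta_pos \<epsilon> a b = \<epsilon>\<^sup>2 * Gf a b"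
proof -
  define m where "m = ln (a/b) / 2"
  have a: "a > 0" using ab b by simp
  have m0: "m \<ge> 0" using ab b by (simp add: m_def)
  have xi: "- \<epsilon> * ln (sqrt (b / a)) = \<epsilon> * m"
    using a b by (simp add: m_def ln_sqrt ln_div field_simps)
  have E: "exp m * exp m = a / b"
    using a b by (simp add: m_def flip: exp_add)
  define c where "c = a / exp m"
  have c: "c > 0" using a by (simp add: c_def)
  have c2: "b * exp m = c"
    using E b by (simp add: c_def field_simps)
  define f where "f = (\<lambda>x. sinh (x / \<epsilon>) * LogMeanH (a * exp (- x / \<epsilon>)) (b * exp (x / \<epsilon>)))"
  have feq: "f (\<epsilon> * m - \<epsilon> * w) = (a*exp(-w) - b*exp w)/2 * sig w" for w
  proof -
    have 1: "(\<epsilon> * m - \<epsilon> * w) / \<epsilon> = m - w" using e by (simp add: field_simps)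
    have 2: "- (\<epsilon> * m - \<epsilon> * w) / \<epsilon> = - (m - w)" using e by (simp add: field_simps)
    have 3: "a * exp (- (m - w)) = c * exp w"
      by (simp add: c_def exp_diff exp_minus field_simps)
    have 4: "b * exp (m - w) = c * exp (- w)"
      using c2 by (simp add: exp_diff exp_minus field_simps)
    have "f (\<epsilon> * m - \<epsilon> * w) = sinh (m - w) * (c * sig w)"
      unfolding f_def 1 2 3 4 using LMH_exp[OF c] by simp
    also have "c * sinh (m - w) = (a*exp(-w) - b*exp w)/2"
      using c2 by (simp add: sinh_def c_def exp_diff exp_minus field_simps)
    then have "sinh (m - w) * (c * sig w) = (a*exp(-w) - b*exp w)/2 * sig w"
      by (metis mult.assoc mult.commute)
    finally show ?thesis .
  qed
  have "beta_pos \<epsilon> a b = \<epsilon> * (LBINT x=ereal 0..ereal (\<epsilon> * m). f x)"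
    unfolding beta_pos_def alpha_star_def xi f_def ..
  also have "\<dots> = \<epsilon> * (\<epsilon> * (LBINT w=ereal 0..ereal (\<epsilon> * m/\<epsilon>). f (\<epsilon> * m - \<epsilon>*w)))"
    using subst1[OF e, of "\<epsilon> * m" f] e m0 by simp
  also have "\<dots> = \<epsilon> * (\<epsilon> * (LBINT w=ereal 0..ereal m. (a*exp(-w) - b*exp w)/2 * sig w))"
    using e by (simp add: feq)
  also have "\<dots> = \<epsilon>\<^sup>2 * Gf a b"
    by (simp add: Gf_def m_def power2_eq_square)
  finally show ?thesis .
qed

lemma beta_pos_le:
  assumes e: "\<epsilon> > 0" and ab: "a \<le> b" and a: "a > 0"
  shows "beta_pos \<epsilon> a b = \<epsilon>\<^sup>2 * Gf b a"
proof -
  define m where "m = ln (b/a) / 2"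
  have b: "b > 0" using ab a by simp
  have m0: "m \<ge> 0" using ab a by (simp add: m_def)
  have xi: "- \<epsilon> * ln (sqrt (b / a)) = - (\<epsilon> * m)"
    using a b by (simp add: m_def ln_sqrt ln_div field_simps)
  have E: "exp m * exp m = b / a"
    using a b by (simp add: m_def flip: exp_add)
  define c where "c = b / exp m"
  have c: "c > 0" using b by (simp add: c_def)
  have c2: "a * exp m = c"
    using E a by (simp add: c_def field_simps)
  define f where "f = (\<lambda>x. sinh (x / \<epsilon>) * LogMeanH (a * exp (- x / \<epsilon>)) (b * exp (x / \<epsilon>)))"
  have feq: "f (- (\<epsilon> * m) + \<epsilon> * w) = - ((b*exp(-w) - a*exp w)/2 * sig w)" for w
  proof -
    have 1: "(- (\<epsilon> * m) + \<epsilon> * w) / \<epsilon> = - (m - w)" using e by (simp add: field_simps)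
    have 2: "- (- (\<epsilon> * m) + \<epsilon> * w) / \<epsilon> = (m - w)" using e by (simp add: field_simps)
    have 3: "b * exp (- (m - w)) = c * exp w"
      by (simp add: c_def exp_diff exp_minus field_simps)
    have 4: "a * exp (m - w) = c * exp (- w)"
      using c2 by (simp add: exp_diff exp_minus field_simps)
    have "f (- (\<epsilon> * m) + \<epsilon> * w) = - sinh (m - w) * LogMeanH (c * exp (- w)) (c * exp w)"
    proof -
      have "sinh (w - m) = - sinh (m - w)" by (metis minus_diff_eq sinh_minus)
      then show ?thesis unfolding f_def 1 2 3 4 by simp
    qed
    also have "LogMeanH (c * exp (- w)) (c * exp w) = c * sig w"
      using LMH_exp[OF c, of "-w"] by (simp add: sig_even)
    also have "c * sinh (m - w) = (b*exp(-w) - a*exp w)/2"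
      using c2 by (simp add: sinh_def c_def exp_diff exp_minus field_simps)
    then have "- sinh (m - w) * (c * sig w) = - ((b*exp(-w) - a*exp w)/2 * sig w)"
      by (metis mult.assoc mult.commute mult_minus_left)
    finally show ?thesis .
  qed
  have "beta_pos \<epsilon> a b = \<epsilon> * (LBINT x=ereal 0..ereal (- (\<epsilon> * m)). f x)"
    unfolding beta_pos_def alpha_star_def xi f_def ..
  also have "\<dots> = \<epsilon> * (- \<epsilon> * (LBINT w=ereal 0..ereal (- (- (\<epsilon> * m))/\<epsilon>). f (- (\<epsilon> * m) + \<epsilon>*w)))"
    using subst2[OF e, of "- (\<epsilon> * m)" f] e m0 by simp
  also have "\<dots> = \<epsilon> * (- \<epsilon> * (LBINT w=ereal 0..ereal m. - ((b*exp(-w) - a*exp w)/2 * sig w)))"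
  proof -
    have fe: "(\<lambda>w. f (- (\<epsilon> * m) + \<epsilon> * w)) = (\<lambda>w. - ((b*exp(-w) - a*exp w)/2 * sig w))"
      by (rule ext, rule feq)
    have me: "- (- (\<epsilon> * m)) / \<epsilon> = m" using e by simp
    show ?thesis by (simp only: fe me)
  qed
  also have "\<dots> = \<epsilon>\<^sup>2 * Gf b a"
    by (simp add: Gf_def m_def power2_eq_square interval_lebesgue_integral_uminus)
  finally show ?thesis .
qed




lemma sinh_ge_self: assumes "(w::real) \<ge> 0" shows "w \<le> sinh w"
proof -
  have "(\<lambda>x. sinh x - x) 0 \<le> (\<lambda>x. sinh x - x) w"
    by (rule DERIV_nonneg_imp_nondecreasing[OF assms])
       (auto intro!: derivative_eq_intros exI simp: cosh_real_ge_1)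
  then show ?thesis by simp
qed

lemma sig_nonneg: "sig w \<ge> 0"
  by (cases "w \<ge> 0") (auto simp: sig_def divide_nonneg_nonneg divide_nonpos_nonpos)

lemma sig_le1: "sig w \<le> 1"
proof (cases "w = 0")
  case True then show ?thesis by (simp add: sig_def)
next
  case False
  have "\<bar>w\<bar> \<le> sinh \<bar>w\<bar>" by (rule sinh_ge_self) simp
  then have "\<bar>w\<bar> \<le> \<bar>sinh w\<bar>" by simp
  moreover have "\<bar>sinh w\<bar> > 0" using False by simp
  ultimately have "\<bar>w\<bar> / \<bar>sinh w\<bar> \<le> 1" by (simp add: divide_le_eq_1_pos)
  moreover have "w / sinh w \<le> \<bar>w\<bar> / \<bar>sinh w\<bar>" by (metis abs_divide abs_ge_self)
  ultimately have "w / sinh w \<le> 1" by linarith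
  then show ?thesis using False by (simp add: sig_def)
qed

lemma sig_lim0: "((\<lambda>w::real. w / sinh w) \<longlongrightarrow> 1) (at 0)" by real_asymp

lemma isCont_sig: "isCont sig x"
proof (cases "x = 0")
  case True
  have ev: "eventually (\<lambda>w. w / sinh w = sig w) (at (0::real))"
    by (auto simp: eventually_at sig_def intro!: exI[of _ 1])
  have "(sig \<longlongrightarrow> 1) (at 0)"
    by (rule Lim_transform_eventually[OF sig_lim0 ev])
  then show ?thesis using True by (simp add: isCont_def sig_def)
next
  case False
  have ev: "eventually (\<lambda>w. w / sinh w = sig w) (nhds x)"
  proof -
    have "open (-{0::real})" by auto
    then have "eventually (\<lambda>w. w \<in> -{0}) (nhds x)" using False by (intro eventually_nhds_in_open) auto
    then show ?thesis by eventually_elim (auto simp: sig_def)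
  qed
  have "isCont (\<lambda>w. w / sinh w) x" using False by (auto intro!: continuous_intros)
  then show ?thesis using isCont_cong[OF ev] by simp
qed

lemma cont_sig: "continuous_on S sig"
  by (simp add: continuous_at_imp_continuous_on isCont_sig)

definition Kf :: "real \<Rightarrow> real" where
  "Kf m = (LBINT w=ereal 0..ereal m. exp (-w) / 2 * sig w)"
definition Lf :: "real \<Rightarrow> real" where
  "Lf m = (LBINT w=ereal 0..ereal m. exp w / 2 * sig w)"

lemma G_split: "Gf x y = x * Kf (ln (x/y)/2) - y * Lf (ln (x/y)/2)"
proof -
  have i1: "interval_lebesgue_integrable lborel a b (\<lambda>w. x * (exp (-w) / 2 * sig w))" for a b :: real
    by (intro interval_integrable_isCont) (auto intro!: continuous_intros isCont_sig)
  have i2: "interval_lebesgue_integrable lborel a b (\<lambda>w. y * (exp w / 2 * sig w))" for a b :: real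
    by (intro interval_integrable_isCont) (auto intro!: continuous_intros isCont_sig)
  have e: "(\<lambda>w. (x*exp(-w) - y*exp w)/2 * sig w) = (\<lambda>w. x * (exp (-w) / 2 * sig w) - y * (exp w / 2 * sig w))"
    by (auto simp: field_simps)
  show ?thesis unfolding Gf_def e Kf_def Lf_def
    by (subst interval_lebesgue_integral_diff(2)[OF i1 i2]) simp
qed

lemma int_exp_neg: assumes "m \<ge> 0" shows "(LBINT w=ereal 0..ereal m. exp (-w) / 2) = (1 - exp (-m)) / 2"
proof -
  have "(LBINT w=ereal 0..ereal m. exp (-w) / 2) = (- exp (-m) / 2) - (- exp (-0) / 2)"
    by (rule interval_integral_FTC_finite) (auto intro!: continuous_intros derivative_eq_intros simp flip: has_real_derivative_iff_has_vector_derivative)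
  then show ?thesis by simp
qed

lemma int_exp_pos: assumes "m \<ge> 0" shows "(LBINT w=ereal 0..ereal m. exp w / 2) = (exp m - 1) / 2"
proof -
  have "(LBINT w=ereal 0..ereal m. exp w / 2) = (exp m / 2) - (exp 0 / 2)"
    by (rule interval_integral_FTC_finite) (auto intro!: continuous_intros derivative_eq_intros simp flip: has_real_derivative_iff_has_vector_derivative)
  then show ?thesis by simp
qed

lemma sint_le:
  fixes f g :: "real \<Rightarrow> real"
  assumes "m \<ge> 0" "\<And>w. isCont f w" "\<And>w. isCont g w" "\<And>w. 0 \<le> w \<Longrightarrow> w \<le> m \<Longrightarrow> f w \<le> g w"
  shows "(LBINT w=ereal 0..ereal m. f w) \<le> (LBINT w=ereal 0..ereal m. g w)"
proof -
  have "interval_lebesgue_integrable lborel (ereal 0) (ereal m) f"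
       "interval_lebesgue_integrable lborel (ereal 0) (ereal m) g"
    using assms by (auto intro!: interval_integrable_isCont)
  then have "set_integrable lborel {0<..<m} f" "set_integrable lborel {0<..<m} g"
    using assms by (auto simp: interval_lebesgue_integrable_def)
  then show ?thesis using assms
    by (auto simp: interval_lebesgue_integral_def intro!: set_integral_mono)
qed

lemma K_bounds: assumes "m \<ge> 0" shows "0 \<le> Kf m" "Kf m \<le> 1/2"
proof -
  have "(LBINT w=ereal 0..ereal m. 0) \<le> Kf m" unfolding Kf_def
    using assms by (intro sint_le) (auto intro!: continuous_intros isCont_sig sig_nonneg mult_nonneg_nonneg)
  then show "0 \<le> Kf m" by simp
  have "Kf m \<le> (LBINT w=ereal 0..ereal m. exp (-w) / 2)" unfolding Kf_def
    using assms by (intro sint_le) (auto intro!: continuous_intros isCont_sig mult_left_le[OF sig_le1] sig_le1 simp: mult.commute)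
  also have "\<dots> = (1 - exp (-m)) / 2" by (rule int_exp_neg[OF assms])
  also have "\<dots> \<le> 1/2" by simp
  finally show "Kf m \<le> 1/2" .
qed

lemma L_bounds: assumes "m \<ge> 0" shows "0 \<le> Lf m" "Lf m \<le> exp m / 2"
proof -
  have "(LBINT w=ereal 0..ereal m. 0) \<le> Lf m" unfolding Lf_def
    using assms by (intro sint_le) (auto intro!: continuous_intros isCont_sig sig_nonneg mult_nonneg_nonneg)
  then show "0 \<le> Lf m" by simp
  have "Lf m \<le> (LBINT w=ereal 0..ereal m. exp w / 2)" unfolding Lf_def
    using assms by (intro sint_le) (auto intro!: continuous_intros isCont_sig mult_left_le[OF sig_le1] sig_le1 simp: mult.commute)
  also have "\<dots> = (exp m - 1) / 2" by (rule int_exp_pos[OF assms])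
  also have "\<dots> \<le> exp m / 2" by simp
  finally show "Lf m \<le> exp m / 2" .
qed

lemma K_mono: assumes "0 \<le> m1" "m1 \<le> m2" shows "Kf m1 \<le> Kf m2"
proof -
  have int0: "interval_lebesgue_integrable lborel (ereal 0) (ereal m2) (\<lambda>w. exp (-w) / 2 * sig w)"
    by (intro interval_integrable_isCont) (auto intro!: continuous_intros isCont_sig)
  have int: "interval_lebesgue_integrable lborel (min (ereal 0) (min (ereal m1) (ereal m2))) (max (ereal 0) (max (ereal m1) (ereal m2))) (\<lambda>w. exp (-w) / 2 * sig w)"
    using int0 assms by (simp add: min_def max_def)
  have "Kf m1 + (LBINT w=ereal m1..ereal m2. exp (-w) / 2 * sig w) = Kf m2"
    unfolding Kf_def by (rule interval_integral_sum[OF int])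
  moreover have "0 \<le> (LBINT w=ereal m1..ereal m2. exp (-w) / 2 * sig w)"
    using assms unfolding interval_lebesgue_integral_def set_lebesgue_integral_def
    by (auto intro!: Bochner_Integration.integral_nonneg sig_nonneg mult_nonneg_nonneg)
  ultimately show ?thesis by simp
qed

lemma exp_half_ln: assumes "z > 0" shows "exp (ln z / 2) = sqrt z"
  using assms powr_half_sqrt[of z] by (simp add: powr_def)




definition Kinf :: real where "Kinf = (SUP m\<in>{0..}. Kf m)"

lemma K_bdd: "bdd_above (Kf ` {0..})"
  using K_bounds(2) by (auto intro!: bdd_aboveI[of _ "1/2"])

lemma Kinf_bounds: "0 \<le> Kinf" "Kinf \<le> 1/2"
proof -
  have "Kf 0 \<le> Kinf" unfolding Kinf_def by (rule cSUP_upper[OF _ K_bdd]) simp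
  then show "0 \<le> Kinf" using K_bounds(1)[of 0] by simp
  show "Kinf \<le> 1/2" unfolding Kinf_def 
  proof (rule cSUP_least)
    show "{0::real..} \<noteq> {}" by auto
    show "Kf x \<le> 1/2" if "x \<in> {0..}" for x using that K_bounds(2)[of x] by simp
  qed
qed

lemma K_lim: "(Kf \<longlongrightarrow> Kinf) at_top"
proof (rule order_tendstoI)
  fix y assume "y < Kinf"
  then obtain m0 where m0: "m0 \<ge> 0" "y < Kf m0"
    unfolding Kinf_def using less_cSUP_iff[OF _ K_bdd] by auto
  show "eventually (\<lambda>m. y < Kf m) at_top"
    unfolding eventually_at_top_linorder
    using m0 K_mono by (intro exI[of _ m0]) (auto intro: less_le_trans)
next
  fix y assume "Kinf < y"
  show "eventually (\<lambda>m. Kf m < y) at_top"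
    unfolding eventually_at_top_linorder
    using \<open>Kinf < y\<close> cSUP_upper[OF _ K_bdd]
    by (intro exI[of _ 0]) (force simp: Kinf_def intro: le_less_trans)
qed

lemma yL_bound:
  assumes "0 < y" "y \<le> x"
  shows "0 \<le> y * Lf (ln (x/y)/2)" "y * Lf (ln (x/y)/2) \<le> sqrt (x*y) / 2"
proof -
  have x: "x > 0" using assms by simp
  have m: "ln (x/y)/2 \<ge> 0" using assms by simp
  show "0 \<le> y * Lf (ln (x/y)/2)" using L_bounds(1)[OF m] assms by simp
  have "y * Lf (ln (x/y)/2) \<le> y * (exp (ln (x/y)/2) / 2)"
    using L_bounds(2)[OF m] assms by (intro mult_left_mono) auto
  also have "\<dots> = y * sqrt (x/y) / 2" using assms x by (simp add: exp_half_ln)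
  also have "y * sqrt (x/y) = sqrt (x*y)"
  proof -
    have "sqrt (x*y) = sqrt (y*y*(x/y))" using assms by (simp add: field_simps)
    also have "\<dots> = sqrt (y*y) * sqrt (x/y)" by (rule real_sqrt_mult)
    also have "sqrt (y*y) = y" using assms by (simp add: real_sqrt_mult_self)
    finally show ?thesis by simp
  qed
  finally show "y * Lf (ln (x/y)/2) \<le> sqrt (x*y) / 2" .
qed

lemma G_bound:
  assumes "0 < y" "y \<le> x"
  shows "\<bar>Gf x y\<bar> \<le> x"
proof -
  have x: "x > 0" using assms by simp
  have m: "ln (x/y)/2 \<ge> 0" using assms by simp
  have k: "0 \<le> x * Kf (ln (x/y)/2)" "x * Kf (ln (x/y)/2) \<le> x / 2"
    using K_bounds[OF m] x by (auto simp: mult_left_le)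
  have "sqrt (x*y) \<le> sqrt (x*x)" using assms x by (intro real_sqrt_le_mono) auto
  then have "sqrt (x*y) \<le> x" using x by simp
  then show ?thesis using yL_bound[OF assms] k unfolding G_split by linarith
qed




lemma G_lim:
  fixes F :: "'b filter"
  assumes X: "(X \<longlongrightarrow> a0) F" and a0: "a0 > 0" and Y: "(Y \<longlongrightarrow> 0) F"
    and ev: "eventually (\<lambda>i. 0 < Y i \<and> Y i \<le> X i) F"
  shows "((\<lambda>i. Gf (X i) (Y i)) \<longlongrightarrow> a0 * Kinf) F"
proof -
  have Yr: "filterlim Y (at_right 0) F"
    using ev by (intro tendsto_imp_filterlim_at_right[OF Y]) (auto elim: eventually_mono)
  have iY: "filterlim (\<lambda>i. inverse (Y i)) at_top F"
    by (rule filterlim_compose[OF filterlim_inverse_at_top_right Yr])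
  have XY: "filterlim (\<lambda>i. X i * inverse (Y i)) at_top F"
    by (rule filterlim_tendsto_pos_mult_at_top[OF X a0 iY])
  have lnXY: "filterlim (\<lambda>i. ln (X i * inverse (Y i))) at_top F"
    by (rule filterlim_compose[OF ln_at_top XY])
  have m: "filterlim (\<lambda>i. 1/2 * ln (X i * inverse (Y i))) at_top F"
    by (rule filterlim_tendsto_pos_mult_at_top[OF tendsto_const _ lnXY]) simp
  have m': "filterlim (\<lambda>i. ln (X i / Y i) / 2) at_top F"
  proof -
    have "ln (X i / Y i) / 2 = 1/2 * ln (X i * inverse (Y i))" for i
      by (simp only: divide_inverse mult.commute[of _ "inverse 2"])
    then show ?thesis using m by presburger
  qed
  have Kl: "((\<lambda>i. Kf (ln (X i / Y i) / 2)) \<longlongrightarrow> Kinf) F"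
    by (rule filterlim_compose[OF K_lim m'])
  have sq: "((\<lambda>i. sqrt (X i * Y i) / 2) \<longlongrightarrow> 0) F"
    using tendsto_divide[OF tendsto_real_sqrt[OF tendsto_mult[OF X Y]] tendsto_const[of 2]] by simp
  have YL: "((\<lambda>i. Y i * Lf (ln (X i / Y i) / 2)) \<longlongrightarrow> 0) F"
  proof (rule tendsto_sandwich[OF _ _ tendsto_const sq])
    show "eventually (\<lambda>i. 0 \<le> Y i * Lf (ln (X i / Y i) / 2)) F"
      using ev by (auto elim!: eventually_mono intro: yL_bound)
    show "eventually (\<lambda>i. Y i * Lf (ln (X i / Y i) / 2) \<le> sqrt (X i * Y i) / 2) F"
      using ev by (rule eventually_mono) (use yL_bound(2) in blast)
  qed
  have "((\<lambda>i. X i * Kf (ln (X i / Y i) / 2) - Y i * Lf (ln (X i / Y i) / 2)) \<longlongrightarrow> a0 * Kinf - 0) F"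
    by (intro tendsto_diff tendsto_mult X Kl YL)
  then show ?thesis by (simp add: G_split)
qed




lemma beta_pos_eq:
  assumes e: "\<epsilon> > 0" and a: "a > 0" and b: "b > 0"
  shows "beta_pos \<epsilon> a b = \<epsilon>\<^sup>2 * Gf (max a b) (min a b)"
proof (cases "b \<le> a")
  case True then show ?thesis using beta_pos_ge[OF e True b] by (simp add: max_def min_def)
next
  case False then show ?thesis using beta_pos_le[OF e _ a, of b] by (simp add: max_def min_def)
qed

lemma beta_pos_bound:
  assumes e: "\<epsilon> > 0" and a: "a > 0" and b: "b > 0"
  shows "\<bar>beta_pos \<epsilon> a b\<bar> \<le> \<epsilon>\<^sup>2 * (a + b)"
proof -
  have "\<bar>Gf (max a b) (min a b)\<bar> \<le> max a b"
    using a b by (intro G_bound) auto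
  also have "\<dots> \<le> a + b" using a b by simp
  finally have "\<bar>Gf (max a b) (min a b)\<bar> \<le> a + b" .
  then have "\<epsilon>\<^sup>2 * \<bar>Gf (max a b) (min a b)\<bar> \<le> \<epsilon>\<^sup>2 * (a + b)"
    by (intro mult_left_mono) auto
  then show ?thesis using beta_pos_eq[OF e a b] by (simp add: abs_mult)
qed

definition Qs :: "(real \<times> real) set" where "Qs = {p. 0 < fst p \<and> 0 < snd p}"

lemma nontriv:
  assumes "a \<ge> 0" "b \<ge> 0"
  shows "\<not> trivial_limit (at (a, b) within Qs)"
  unfolding trivial_limit_within islimpt_approachable
proof (intro notI)
  assume H: "\<not> (\<forall>e>0. \<exists>x'\<in>Qs. x' \<noteq> (a, b) \<and> dist x' (a, b) < e)"
  have "\<exists>x'\<in>Qs. x' \<noteq> (a, b) \<and> dist x' (a, b) < e" if e: "e > 0" for e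
  proof (intro bexI[of _ "(a + e/3, b + e/3)"] conjI)
    show "(a + e/3, b + e/3) \<in> Qs" using assms e by (simp add: Qs_def)
    show "(a + e/3, b + e/3) \<noteq> (a, b)" using e by simp
    have "dist (a + e/3, b + e/3) (a, b) = sqrt ((e/3)\<^sup>2 + (e/3)\<^sup>2)"
      using e by (simp add: dist_Pair_Pair dist_real_def)
    also have "\<dots> \<le> sqrt ((e/3)\<^sup>2) + sqrt ((e/3)\<^sup>2)"
      by (rule sqrt_add_le_add_sqrt) auto
    also have "\<dots> < e" using e by simp
    finally show "dist (a + e/3, b + e/3) (a, b) < e" .
  qed
  with H show False by blast
qed

lemma evQ: "eventually (\<lambda>p. p \<in> Qs) (at x within Qs)"
  by (simp add: eventually_at_filter)

lemma beta_bound: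
  assumes e: "\<epsilon> > 0" and a: "a \<ge> 0" and b: "b \<ge> 0"
  shows "\<bar>beta \<epsilon> a b\<bar> \<le> \<epsilon>\<^sup>2 * (a + b)"
proof (cases "0 < a \<and> 0 < b")
  case True
  then show ?thesis using beta_pos_bound[OF e] by (simp add: beta_def)
next
  case False
  define f where "f = (\<lambda>p. beta_pos \<epsilon> (fst p) (snd p))"
  have bdef: "beta \<epsilon> a b = Lim (at (a, b) within Qs) f"
    using False unfolding beta_def f_def Qs_def by auto
  have lim: "\<exists>v. (f \<longlongrightarrow> v) (at (a, b) within Qs) \<and> \<bar>v\<bar> \<le> \<epsilon>\<^sup>2 * (a + b)"
  proof (cases "a = 0 \<and> b = 0")
    case True
    have "(f \<longlongrightarrow> 0) (at (a, b) within Qs)"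
    proof (rule Lim_null_comparison)
      show "eventually (\<lambda>p. norm (f p) \<le> \<epsilon>\<^sup>2 * (fst p + snd p)) (at (a, b) within Qs)"
        using evQ by (rule eventually_mono) (auto simp: f_def Qs_def intro: beta_pos_bound[OF e])
      have "((\<lambda>p. \<epsilon>\<^sup>2 * (fst p + snd p)) \<longlongrightarrow> \<epsilon>\<^sup>2 * (fst (a,b) + snd (a,b))) (at (a, b) within Qs)"
        by (intro tendsto_intros)
      then show "((\<lambda>p. \<epsilon>\<^sup>2 * (fst p + snd p)) \<longlongrightarrow> 0) (at (a, b) within Qs)"
        using True by simp
    qed
    then show ?thesis by (intro exI[of _ 0]) (use e a b in auto)
  next
    case False2: False
    show ?thesis
    proof (cases "a > 0")
      case True
      then have b0: "b = 0" using False b by auto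
      have X: "((\<lambda>p. fst p) \<longlongrightarrow> a) (at (a, b) within Qs)"
        using tendsto_fst[OF tendsto_ident_at[of "(a,b)" Qs]] by simp
      have Y: "((\<lambda>p. snd p) \<longlongrightarrow> 0) (at (a, b) within Qs)"
        using tendsto_snd[OF tendsto_ident_at[of "(a,b)" Qs]] b0 by simp
      have ev1: "eventually (\<lambda>p. a/2 < fst p) (at (a, b) within Qs)"
        using order_tendstoD(1)[OF X, of "a/2"] True by simp
      have ev2: "eventually (\<lambda>p. snd p < a/2) (at (a, b) within Qs)"
        using order_tendstoD(2)[OF Y, of "a/2"] True by simp
      have ev: "eventually (\<lambda>p. 0 < snd p \<and> snd p \<le> fst p) (at (a, b) within Qs)"
        using ev1 ev2 evQ[of "(a,b)"] by eventually_elim (auto simp: Qs_def)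
      have GL: "((\<lambda>p. Gf (fst p) (snd p)) \<longlongrightarrow> a * Kinf) (at (a, b) within Qs)"
        by (rule G_lim[OF X True Y ev])
      have feq: "eventually (\<lambda>p. \<epsilon>\<^sup>2 * Gf (fst p) (snd p) = f p) (at (a, b) within Qs)"
        using ev evQ[of "(a,b)"] by eventually_elim (auto simp: f_def Qs_def beta_pos_eq[OF e] max_def min_def)
      have "(f \<longlongrightarrow> \<epsilon>\<^sup>2 * (a * Kinf)) (at (a, b) within Qs)"
        by (rule Lim_transform_eventually[OF tendsto_mult[OF tendsto_const GL] feq])
      moreover have "\<bar>\<epsilon>\<^sup>2 * (a * Kinf)\<bar> \<le> \<epsilon>\<^sup>2 * (a + b)"
      proof -
        have "a * Kinf \<le> a" using Kinf_bounds True by (intro mult_left_le) auto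
        moreover have "0 \<le> a * Kinf" using Kinf_bounds True by simp
        ultimately have "\<bar>a * Kinf\<bar> \<le> a + b" using a b by (simp only: abs_of_nonneg)
        then show ?thesis by (simp add: abs_mult mult_left_mono)
      qed
      ultimately show ?thesis by blast
    next
      case False3: False
      then have a0: "a = 0" and bp: "b > 0" using False False2 a b by auto
      have X: "((\<lambda>p. snd p) \<longlongrightarrow> b) (at (a, b) within Qs)"
        using tendsto_snd[OF tendsto_ident_at[of "(a,b)" Qs]] by simp
      have Y: "((\<lambda>p. fst p) \<longlongrightarrow> 0) (at (a, b) within Qs)"
        using tendsto_fst[OF tendsto_ident_at[of "(a,b)" Qs]] a0 by simp
      have ev1: "eventually (\<lambda>p. b/2 < snd p) (at (a, b) within Qs)"
        using order_tendstoD(1)[OF X, of "b/2"] bp by simp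
      have ev2: "eventually (\<lambda>p. fst p < b/2) (at (a, b) within Qs)"
        using order_tendstoD(2)[OF Y, of "b/2"] bp by simp
      have ev: "eventually (\<lambda>p. 0 < fst p \<and> fst p \<le> snd p) (at (a, b) within Qs)"
        using ev1 ev2 evQ[of "(a,b)"] by eventually_elim (auto simp: Qs_def)
      have GL: "((\<lambda>p. Gf (snd p) (fst p)) \<longlongrightarrow> b * Kinf) (at (a, b) within Qs)"
        by (rule G_lim[OF X bp Y ev])
      have feq: "eventually (\<lambda>p. \<epsilon>\<^sup>2 * Gf (snd p) (fst p) = f p) (at (a, b) within Qs)"
        using ev evQ[of "(a,b)"] by eventually_elim (auto simp: f_def Qs_def beta_pos_eq[OF e] max_def min_def)
      have "(f \<longlongrightarrow> \<epsilon>\<^sup>2 * (b * Kinf)) (at (a, b) within Qs)"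
        by (rule Lim_transform_eventually[OF tendsto_mult[OF tendsto_const GL] feq])
      moreover have "\<bar>\<epsilon>\<^sup>2 * (b * Kinf)\<bar> \<le> \<epsilon>\<^sup>2 * (a + b)"
      proof -
        have "b * Kinf \<le> b" using Kinf_bounds bp by (intro mult_left_le) auto
        moreover have "0 \<le> b * Kinf" using Kinf_bounds bp by simp
        ultimately have "\<bar>b * Kinf\<bar> \<le> a + b" using a b by (simp only: abs_of_nonneg)
        then show ?thesis by (simp add: abs_mult mult_left_mono)
      qed
      ultimately show ?thesis by blast
    qed
  qed
  then obtain v where v: "(f \<longlongrightarrow> v) (at (a, b) within Qs)" "\<bar>v\<bar> \<le> \<epsilon>\<^sup>2 * (a + b)" by blast
  have "beta \<epsilon> a b = v" unfolding bdef by (rule tendsto_Lim[OF nontriv[OF a b] v(1)])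
  then show ?thesis using v(2) by simp
qed




lemma frakh_sum: "frakh s + frakh (-s) = 1"
proof (cases "s = 0")
  case True then show ?thesis by (simp add: frakh_def)
next
  case False
  have sh: "4 * (sinh (s/2))\<^sup>2 = exp s - 2 + exp (-s)"
  proof -
    have "4 * (sinh (s/2))\<^sup>2 = (exp (s/2) - exp (-(s/2)))\<^sup>2"
      by (simp add: sinh_def power2_eq_square field_simps)
    also have "\<dots> = exp (s/2) * exp (s/2) - 2 * (exp (s/2) * exp (-(s/2))) + exp (-(s/2)) * exp (-(s/2))"
      by (simp add: power2_eq_square algebra_simps)
    also have "\<dots> = exp s - 2 + exp (-s)"
      by (simp flip: exp_add)
    finally show ?thesis .
  qed
  have sh2: "(sinh (- s / 2))\<^sup>2 = (sinh (s/2))\<^sup>2"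
    by (simp add: sinh_minus)
  define D where "D = 4 * (sinh (s/2))\<^sup>2"
  have nz: "D \<noteq> 0" using False by (simp add: D_def)
  have f1: "frakh s = (exp s - 1 - s) / D" using False by (simp add: frakh_def D_def)
  have f2: "frakh (-s) = (exp (-s) - 1 + s) / D" using False sh2 by (simp add: frakh_def D_def)
  have "frakh s + frakh (-s) = ((exp s - 1 - s) + (exp (-s) - 1 + s)) / D"
    unfolding f1 f2 using nz by (simp add: field_simps)
  also have "(exp s - 1 - s) + (exp (-s) - 1 + s) = D" using sh by (simp add: D_def)
  finally show ?thesis using nz by simp
qed

lemma frakh_nonneg: "0 \<le> frakh s"
proof (cases "s = 0")
  case True then show ?thesis by (simp add: frakh_def)
next
  case False
  have "0 \<le> exp s - 1 - s" using exp_ge_add_one_self[of s] by linarith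
  then show ?thesis using False by (simp add: frakh_def)
qed

lemma frakh_le1: "frakh s \<le> 1"
  using frakh_sum[of s] frakh_nonneg[of "-s"] by simp

lemma frakh_lim0: "((\<lambda>s::real. (exp s - 1 - s) / (4 * (sinh (s / 2))\<^sup>2)) \<longlongrightarrow> 1/2) (at 0)"
  by real_asymp (simp_all add: power2_eq_square)

lemma isCont_frakh: "isCont frakh x"
proof (cases "x = 0")
  case True
  have ev: "eventually (\<lambda>s. (exp s - 1 - s) / (4 * (sinh (s / 2))\<^sup>2) = frakh s) (at (0::real))"
    by (auto simp: eventually_at frakh_def intro!: exI[of _ 1])
  have "(frakh \<longlongrightarrow> 1/2) (at 0)"
    by (rule Lim_transform_eventually[OF frakh_lim0 ev])
  then show ?thesis using True by (simp add: isCont_def frakh_def)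
next
  case False
  have ev: "eventually (\<lambda>s. (exp s - 1 - s) / (4 * (sinh (s / 2))\<^sup>2) = frakh s) (nhds x)"
  proof -
    have "open (-{0::real})" by auto
    then have "eventually (\<lambda>w. w \<in> -{0}) (nhds x)" using False by (intro eventually_nhds_in_open) auto
    then show ?thesis by eventually_elim (auto simp: frakh_def)
  qed
  have "isCont (\<lambda>s. (exp s - 1 - s) / (4 * (sinh (s / 2))\<^sup>2)) x" using False by (auto intro!: continuous_intros)
  then show ?thesis using isCont_cong[OF ev] by simp
qed

lemma frakh_meas[measurable]: "frakh \<in> borel_measurable borel"
  by (intro borel_measurable_continuous_onI continuous_at_imp_continuous_on ballI isCont_frakh)

lemma frakh_top: "(frakh \<longlongrightarrow> 1) at_top"
proof -
  have l: "((\<lambda>s::real. (exp s - 1 - s) / (4 * (sinh (s / 2))\<^sup>2)) \<longlongrightarrow> 1) at_top"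
    by real_asymp (simp_all add: power2_eq_square)
  have "eventually (\<lambda>s. (exp s - 1 - s) / (4 * (sinh (s / 2))\<^sup>2) = frakh s) at_top"
    using eventually_gt_at_top[of 0] by eventually_elim (simp add: frakh_def)
  then show ?thesis by (rule Lim_transform_eventually[OF l])
qed

definition Pf :: "real \<Rightarrow> real" where
  "Pf R = (LBINT t=ereal 0..ereal 1. frakh (t * R) * (1 - t))"

lemma P_integrable: "set_integrable lborel {0<..<1} (\<lambda>t. frakh (t * R) * (1 - t))"
  unfolding set_integrable_def
proof (rule Bochner_Integration.integrable_bound[where f="indicator {0<..<1::real} :: real \<Rightarrow> real"])
  show "integrable lborel (indicator {0<..<1::real} :: real \<Rightarrow> real)" by simp
  show "(\<lambda>x. indicator {0<..<1} x *\<^sub>R (frakh (x * R) * (1 - x))) \<in> borel_measurable lborel"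
    by measurable
  show "AE x in lborel. norm (indicator {0<..<1} x *\<^sub>R (frakh (x * R) * (1 - x))) \<le> norm (indicator {0<..<1::real} x :: real)"
  proof (rule AE_I2)
    fix x :: real
    show "norm (indicator {0<..<1} x *\<^sub>R (frakh (x * R) * (1 - x))) \<le> norm (indicator {0<..<1::real} x :: real)"
    proof (cases "x \<in> {0<..<1}")
      case True
      have "frakh (x * R) * (1 - x) \<le> 1 * 1"
        using True frakh_le1 frakh_nonneg by (intro mult_mono) auto
      moreover have "0 \<le> frakh (x * R) * (1 - x)" using True frakh_nonneg by simp
      ultimately show ?thesis using True by simp
    qed simp
  qed
qed

lemma int_1mt: "(LBINT t=ereal 0..ereal 1. (1 - t)) = 1/2"
proof -
  have "(LBINT t=ereal 0..ereal 1. (1 - t)) = (1 - 1^2/2) - (0 - 0^2/2)"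
    by (rule interval_integral_FTC_finite)
       (auto intro!: continuous_intros derivative_eq_intros simp flip: has_real_derivative_iff_has_vector_derivative)
  then show ?thesis by simp
qed

lemma P_sum: "Pf R + Pf (-R) = 1/2"
proof -
  have "Pf R + Pf (-R) = (LBINT t:{0<..<1}. frakh (t * R) * (1 - t) + frakh (t * (-R)) * (1 - t))"
    unfolding Pf_def using P_integrable[of R] P_integrable[of "-R"]
    by (simp add: interval_lebesgue_integral_def set_integral_add zero_ereal_def)
  also have "\<dots> = (LBINT t:{0<..<1}. (1 - t))"
  proof -
    have "frakh (t * R) * (1 - t) + frakh (t * (-R)) * (1 - t) = 1 - t" for t
    proof -
      have "frakh (t * R) * (1 - t) + frakh (t * (-R)) * (1 - t) = (frakh (t*R) + frakh (-(t*R))) * (1 - t)"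
        by (simp add: algebra_simps)
      then show ?thesis using frakh_sum[of "t*R"] by simp
    qed
    then show ?thesis by simp
  qed
  also have "\<dots> = 1/2" using int_1mt by (simp add: interval_lebesgue_integral_def zero_ereal_def)
  finally show ?thesis .
qed

lemma P_integrand_nonneg: "0 \<le> indicator {0<..<1::real} x *\<^sub>R (frakh (x * R) * (1 - x))"
proof (cases "x \<in> {0<..<1}")
  case True then show ?thesis using frakh_nonneg[of "x*R"] by simp
qed simp

lemma P_nonneg: "0 \<le> Pf R"
  unfolding Pf_def interval_lebesgue_integral_def set_lebesgue_integral_def
  using P_integrand_nonneg by (simp add: zero_ereal_def Bochner_Integration.integral_nonneg)

lemma P_bounds: "0 \<le> Pf R" "Pf R \<le> 1/2"
  using P_nonneg[of R] P_nonneg[of "-R"] P_sum[of R] by auto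

lemma P_top: "(Pf \<longlongrightarrow> 1/2) at_top"
proof -
  define s where "s = (\<lambda>R t. indicator {0<..<1::real} t *\<^sub>R (frakh (t * R) * (1 - t)))"
  define f where "f = (\<lambda>t. indicator {0<..<1::real} t *\<^sub>R (1 - t))"
  have "((\<lambda>R. integral\<^sup>L lborel (s R)) \<longlongrightarrow> integral\<^sup>L lborel f) at_top"
  proof (rule integral_dominated_convergence_at_top[where w="indicator {0<..<1::real}"])
    show "f \<in> borel_measurable lborel" unfolding f_def by measurable
    show "s R \<in> borel_measurable lborel" for R unfolding s_def by measurable
    show "integrable lborel (indicator {0<..<1::real} :: real \<Rightarrow> real)" by simp
    show "AE x in lborel. ((\<lambda>R. s R x) \<longlongrightarrow> f x) at_top"
    proof (rule AE_I2)
      fix x :: real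
      show "((\<lambda>R. s R x) \<longlongrightarrow> f x) at_top"
      proof (cases "x \<in> {0<..<1}")
        case True
        have "filterlim (\<lambda>R. x * R) at_top at_top"
          using True by (intro filterlim_tendsto_pos_mult_at_top[OF tendsto_const _ filterlim_ident]) auto
        then have "((\<lambda>R. frakh (x * R)) \<longlongrightarrow> 1) at_top"
          by (rule filterlim_compose[OF frakh_top])
        then have "((\<lambda>R. frakh (x * R) * (1 - x)) \<longlongrightarrow> 1 * (1 - x)) at_top"
          by (intro tendsto_intros)
        then show ?thesis using True by (simp add: s_def f_def)
      qed (simp add: s_def f_def)
    qed
    show "\<forall>\<^sub>F R in at_top. AE x in lborel. norm (s R x) \<le> indicator {0<..<1::real} x"
    proof (intro always_eventually allI AE_I2)
      fix R x :: real
      show "norm (s R x) \<le> indicator {0<..<1::real} x"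
      proof (cases "x \<in> {0<..<1}")
        case True
        have "frakh (x * R) * (1 - x) \<le> 1 * 1"
          using True frakh_le1 frakh_nonneg by (intro mult_mono) auto
        moreover have "0 \<le> frakh (x * R) * (1 - x)" using True frakh_nonneg by simp
        ultimately show ?thesis using True by (simp add: s_def)
      qed (simp add: s_def)
    qed
  qed
  moreover have "integral\<^sup>L lborel (s R) = Pf R" for R
    by (simp add: s_def Pf_def interval_lebesgue_integral_def set_lebesgue_integral_def zero_ereal_def)
  moreover have "integral\<^sup>L lborel f = 1/2"
    using int_1mt by (simp add: f_def interval_lebesgue_integral_def set_lebesgue_integral_def zero_ereal_def)
  ultimately show ?thesis by simp
qed

lemma P_bot: "(Pf \<longlongrightarrow> 0) at_bot"
proof -
  have "((\<lambda>R. Pf (- R)) \<longlongrightarrow> 1/2) at_bot"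
    by (rule filterlim_compose[OF P_top filterlim_uminus_at_top_at_bot])
  then have "((\<lambda>R. 1/2 - Pf (- R)) \<longlongrightarrow> 1/2 - 1/2) at_bot"
    by (intro tendsto_intros)
  moreover have "1/2 - Pf (- R) = Pf R" for R using P_sum[of R] by simp
  ultimately show ?thesis by simp
qed

lemma hh_eq:
  shows "hh \<epsilon> a b q = a * Pf (q / \<epsilon>) + b * Pf (- q / \<epsilon>)"
proof -
  have i1: "set_integrable lborel {0<..<1} (\<lambda>t. a * (frakh (t * (q/\<epsilon>)) * (1 - t)))"
    using P_integrable[of "q/\<epsilon>"] by (rule set_integrable_mult_right)
  have i2: "set_integrable lborel {0<..<1} (\<lambda>t. b * (frakh (t * (-q/\<epsilon>)) * (1 - t)))"
    using P_integrable[of "-q/\<epsilon>"] by (rule set_integrable_mult_right)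
  have e: "(\<lambda>t. (a * frakh (t * q / \<epsilon>) + b * frakh (- t * q / \<epsilon>)) * (1 - t))
     = (\<lambda>t. a * (frakh (t * (q/\<epsilon>)) * (1 - t)) + b * (frakh (t * (-q/\<epsilon>)) * (1 - t)))"
    by (rule ext) (simp add: algebra_simps)
  show ?thesis unfolding hh_def e Pf_def
    using set_integral_add(2)[OF i1 i2]
    by (simp add: interval_lebesgue_integral_def zero_ereal_def)
qed




lemma hh_term_lim:
  fixes a b q :: "real \<Rightarrow> real"
  assumes A: "(a \<longlongrightarrow> a0) (at_right 0)" and B: "(b \<longlongrightarrow> b0) (at_right 0)"
    and Qq: "(q \<longlongrightarrow> q0) (at_right 0)"
  shows "((\<lambda>e. (q e)\<^sup>2 * hh e (a e) (b e) (q e)) \<longlongrightarrow> (a0 * (max q0 0)\<^sup>2 + b0 * (max (- q0) 0)\<^sup>2) / 2) (at_right 0)"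
proof -
  have eq: "(\<lambda>e. (q e)\<^sup>2 * hh e (a e) (b e) (q e)) = (\<lambda>e. (q e)\<^sup>2 * (a e * Pf (q e / e) + b e * Pf (- q e / e)))"
    by (simp add: hh_eq)
  have inv: "filterlim (\<lambda>e::real. inverse e) at_top (at_right 0)"
    by (rule filterlim_inverse_at_top_right)
  consider "q0 > 0" | "q0 < 0" | "q0 = 0" by linarith
  then show ?thesis
  proof cases
    case 1
    have t: "filterlim (\<lambda>e. q e * inverse e) at_top (at_right 0)"
      by (rule filterlim_tendsto_pos_mult_at_top[OF Qq 1 inv])
    have t': "filterlim (\<lambda>e. q e / e) at_top (at_right 0)"
      using t by (simp add: divide_inverse)
    have b': "filterlim (\<lambda>e. - q e / e) at_bot (at_right 0)"
      using t' by (simp add: filterlim_uminus_at_bot)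
    have P1: "((\<lambda>e. Pf (q e / e)) \<longlongrightarrow> 1/2) (at_right 0)"
      by (rule filterlim_compose[OF P_top t'])
    have P2: "((\<lambda>e. Pf (- q e / e)) \<longlongrightarrow> 0) (at_right 0)"
      by (rule filterlim_compose[OF P_bot b'])
    have "((\<lambda>e. (q e)\<^sup>2 * (a e * Pf (q e / e) + b e * Pf (- q e / e))) \<longlongrightarrow> q0\<^sup>2 * (a0 * (1/2) + b0 * 0)) (at_right 0)"
      by (intro tendsto_intros Qq A B P1 P2)
    then show ?thesis using 1 unfolding eq by (simp add: max_def mult.commute)
  next
    case 2
    have Qm: "((\<lambda>e. - q e) \<longlongrightarrow> - q0) (at_right 0)" by (intro tendsto_intros Qq)
    have t: "filterlim (\<lambda>e. (- q e) * inverse e) at_top (at_right 0)"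
      by (rule filterlim_tendsto_pos_mult_at_top[OF Qm _ inv]) (use 2 in simp)
    have t': "filterlim (\<lambda>e. - q e / e) at_top (at_right 0)"
      using t by (simp add: divide_inverse)
    have b': "filterlim (\<lambda>e. q e / e) at_bot (at_right 0)"
      using t' by (simp add: filterlim_uminus_at_bot)
    have P1: "((\<lambda>e. Pf (- q e / e)) \<longlongrightarrow> 1/2) (at_right 0)"
      by (rule filterlim_compose[OF P_top t'])
    have P2: "((\<lambda>e. Pf (q e / e)) \<longlongrightarrow> 0) (at_right 0)"
      by (rule filterlim_compose[OF P_bot b'])
    have "((\<lambda>e. (q e)\<^sup>2 * (a e * Pf (q e / e) + b e * Pf (- q e / e))) \<longlongrightarrow> q0\<^sup>2 * (a0 * 0 + b0 * (1/2))) (at_right 0)"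
      by (intro tendsto_intros Qq A B P1 P2)
    then show ?thesis using 2 unfolding eq by (simp add: max_def mult.commute)
  next
    case 3
    have "((\<lambda>e. (q e)\<^sup>2 * (a e * Pf (q e / e) + b e * Pf (- q e / e))) \<longlongrightarrow> 0) (at_right 0)"
    proof (rule Lim_null_comparison)
      show "eventually (\<lambda>e. norm ((q e)\<^sup>2 * (a e * Pf (q e / e) + b e * Pf (- q e / e))) \<le> (q e)\<^sup>2 * (\<bar>a e\<bar> + \<bar>b e\<bar>)) (at_right 0)"
      proof (intro always_eventually allI)
        fix e
        have "\<bar>a e * Pf (q e / e)\<bar> \<le> \<bar>a e\<bar>"
          using P_bounds[of "q e / e"] by (simp add: abs_mult mult_left_le)
        moreover have "\<bar>b e * Pf (- q e / e)\<bar> \<le> \<bar>b e\<bar>"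
          using P_bounds[of "- q e / e"] by (simp add: abs_mult mult_left_le)
        ultimately have "\<bar>a e * Pf (q e / e) + b e * Pf (- q e / e)\<bar> \<le> \<bar>a e\<bar> + \<bar>b e\<bar>" by linarith
        then show "norm ((q e)\<^sup>2 * (a e * Pf (q e / e) + b e * Pf (- q e / e))) \<le> (q e)\<^sup>2 * (\<bar>a e\<bar> + \<bar>b e\<bar>)"
          by (simp add: abs_mult mult_left_mono)
      qed
      have "((\<lambda>e. (q e)\<^sup>2 * (\<bar>a e\<bar> + \<bar>b e\<bar>)) \<longlongrightarrow> q0\<^sup>2 * (\<bar>a0\<bar> + \<bar>b0\<bar>)) (at_right 0)"
        by (intro tendsto_intros Qq A B)
      then show "((\<lambda>e. (q e)\<^sup>2 * (\<bar>a e\<bar> + \<bar>b e\<bar>)) \<longlongrightarrow> 0) (at_right 0)" using 3 by simp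
    qed
    then show ?thesis using 3 unfolding eq by simp
  qed
qed

lemma beta_term_lim:
  fixes a b :: "real \<Rightarrow> real"
  assumes A: "(a \<longlongrightarrow> a0) (at_right 0)" and B: "(b \<longlongrightarrow> b0) (at_right 0)"
    and pos: "eventually (\<lambda>e. 0 \<le> a e \<and> 0 \<le> b e) (at_right 0)"
  shows "((\<lambda>e. beta e (a e) (b e) * c) \<longlongrightarrow> 0) (at_right 0)"
proof (rule Lim_null_comparison)
  show "eventually (\<lambda>e. norm (beta e (a e) (b e) * c) \<le> e\<^sup>2 * (a e + b e) * \<bar>c\<bar>) (at_right 0)"
    using pos eventually_at_right_less[of "0::real"]
  proof eventually_elim
    case (elim e)
    then have "\<bar>beta e (a e) (b e)\<bar> \<le> e\<^sup>2 * (a e + b e)" by (intro beta_bound) auto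
    then show ?case by (simp add: abs_mult mult_right_mono)
  qed
  have "((\<lambda>e. e\<^sup>2 * (a e + b e) * \<bar>c\<bar>) \<longlongrightarrow> 0\<^sup>2 * (a0 + b0) * \<bar>c\<bar>) (at_right 0)"
    by (intro tendsto_intros A B)
  then show "((\<lambda>e. e\<^sup>2 * (a e + b e) * \<bar>c\<bar>) \<longlongrightarrow> 0) (at_right 0)" by simp
qed




lemma alpha0_half: "2 * (t * alpha0 a b (q / 2)) = 1/2 * ((a * (max q 0)\<^sup>2 + b * (max (- q) 0)\<^sup>2) / 2 * t)"
proof -
  have h1: "max (q/2) 0 = max q 0 / 2" and h2: "max (- (q/2)) 0 = max (- q) 0 / 2" by (auto simp: max_def)
  show ?thesis unfolding alpha0_def h1 h2 by (simp add: power_divide field_simps)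
qed

theorem lemma5p4:
  fixes \<Omega> :: "'a::euclidean_space set"
    and T :: "'a set set"
    and V W :: "'a \<Rightarrow> real"
    and rho_eps :: "real \<Rightarrow> 'a set \<Rightarrow> real"
    and rho :: "'a set \<Rightarrow> real"
  assumes tess: "tessellation \<Omega> T"
    and nondeg: "nondegenerate T"
    and V_lip: "\<exists>C. C-lipschitz_on UNIV V"
    and V_C1: "\<exists>V'. (\<forall>x. (V has_derivative blinfun_apply (V' x)) (at x)) \<and> continuous_on UNIV V'"
    and V_bdd: "bdd_below (range V)"
    and W_nonneg: "\<And>x. 0 \<le> W x"
    and W_sym: "\<And>x. W (- x) = W x"
    and W_lip: "\<exists>C. C-lipschitz_on UNIV W"
    and W_C1: "\<exists>W'. (\<forall>x. x \<noteq> 0 \<longrightarrow> (W has_derivative blinfun_apply (W' x)) (at x))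
                    \<and> continuous_on (- {0}) W'"
    and rho_eps_prob: "\<And>\<epsilon>. 0 < \<epsilon> \<Longrightarrow> prob_on T (rho_eps \<epsilon>)"
    and rho_prob: "prob_on T rho"
    and conv: "\<And>K. K \<in> T \<Longrightarrow> ((\<lambda>\<epsilon>. rho_eps \<epsilon> K) \<longlongrightarrow> rho K) (at_right 0)"
  shows "((\<lambda>\<epsilon>. D_eps \<epsilon> V W T (rho_eps \<epsilon>)) \<longlongrightarrow> D_up V W T rho) (at_right 0)"
proof -
  define E where "E = edges T"
  have finT: "finite T" using tess by (simp add: tessellation_def)
  have ET: "E \<subseteq> T \<times> T" by (auto simp: E_def edges_def)
  have finE: "finite E" using finite_subset[OF ET] finT by simp
  have Epair: "K \<in> T" "L \<in> T" if "(K, L) \<in> E" for K L using that ET by auto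
  have dlim: "((\<lambda>\<epsilon>. dens (rho_eps \<epsilon>) K) \<longlongrightarrow> dens rho K) (at_right 0)" if "K \<in> T" for K
  proof -
    have "((\<lambda>\<epsilon>. rho_eps \<epsilon> K * inverse (vol K)) \<longlongrightarrow> rho K * inverse (vol K)) (at_right 0)"
      by (intro tendsto_mult_right conv that)
    then show ?thesis by (simp add: dens_def divide_inverse)
  qed
  have dpos: "eventually (\<lambda>\<epsilon>. 0 \<le> dens (rho_eps \<epsilon>) K) (at_right 0)" if "K \<in> T" for K
    using eventually_at_right_less[of "0::real"]
  proof eventually_elim
    case (elim e)
    then have "0 \<le> rho_eps e K" using rho_eps_prob[of e] that by (simp add: prob_on_def)
    moreover have "0 \<le> vol K" by (simp add: vol_def)
    ultimately show ?case by (simp add: dens_def)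
  qed
  have qlim: "((\<lambda>\<epsilon>. qKL V W T (rho_eps \<epsilon>) K L) \<longlongrightarrow> qKL V W T rho K L) (at_right 0)" for K L
    unfolding qKL_def by (intro tendsto_intros tendsto_sum conv)
  have S1: "((\<lambda>\<epsilon>. \<Sum>(K, L)\<in>E. beta \<epsilon> (dens (rho_eps \<epsilon>) K) (dens (rho_eps \<epsilon>) L) * tau K L) \<longlongrightarrow> (\<Sum>x\<in>E. 0)) (at_right 0)"
  proof (rule tendsto_sum)
    fix x assume "x \<in> E"
    then obtain K L where x: "x = (K, L)" "K \<in> T" "L \<in> T" using Epair by (cases x) auto
    have "((\<lambda>\<epsilon>. beta \<epsilon> (dens (rho_eps \<epsilon>) K) (dens (rho_eps \<epsilon>) L) * tau K L) \<longlongrightarrow> 0) (at_right 0)"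
      using dpos[OF x(2)] dpos[OF x(3)]
      by (intro beta_term_lim[OF dlim[OF x(2)] dlim[OF x(3)]]) (auto elim: eventually_elim2)
    then show "((\<lambda>\<epsilon>. case x of (K, L) \<Rightarrow> beta \<epsilon> (dens (rho_eps \<epsilon>) K) (dens (rho_eps \<epsilon>) L) * tau K L) \<longlongrightarrow> 0) (at_right 0)"
      using x by simp
  qed
  have S2: "((\<lambda>\<epsilon>. \<Sum>(K, L)\<in>E. (dens (rho_eps \<epsilon>) L - dens (rho_eps \<epsilon>) K) * qKL V W T (rho_eps \<epsilon>) K L * tau K L)
      \<longlongrightarrow> (\<Sum>(K, L)\<in>E. (dens rho L - dens rho K) * qKL V W T rho K L * tau K L)) (at_right 0)"
  proof (rule tendsto_sum)
    fix x assume "x \<in> E"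
    then obtain K L where x: "x = (K, L)" "K \<in> T" "L \<in> T" using Epair by (cases x) auto
    have "((\<lambda>\<epsilon>. (dens (rho_eps \<epsilon>) L - dens (rho_eps \<epsilon>) K) * qKL V W T (rho_eps \<epsilon>) K L * tau K L)
        \<longlongrightarrow> (dens rho L - dens rho K) * qKL V W T rho K L * tau K L) (at_right 0)"
      by (intro tendsto_intros dlim x qlim)
    then show "((\<lambda>\<epsilon>. case x of (K, L) \<Rightarrow> (dens (rho_eps \<epsilon>) L - dens (rho_eps \<epsilon>) K) * qKL V W T (rho_eps \<epsilon>) K L * tau K L)
        \<longlongrightarrow> (case x of (K, L) \<Rightarrow> (dens rho L - dens rho K) * qKL V W T rho K L * tau K L)) (at_right 0)"
      using x by simp
  qed
  have S3: "((\<lambda>\<epsilon>. \<Sum>(K, L)\<in>E. (qKL V W T (rho_eps \<epsilon>) K L)\<^sup>2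
                 * hh \<epsilon> (dens (rho_eps \<epsilon>) K) (dens (rho_eps \<epsilon>) L) (qKL V W T (rho_eps \<epsilon>) K L) * tau K L)
      \<longlongrightarrow> (\<Sum>(K, L)\<in>E. (dens rho K * (max (qKL V W T rho K L) 0)\<^sup>2 + dens rho L * (max (- qKL V W T rho K L) 0)\<^sup>2) / 2 * tau K L)) (at_right 0)"
  proof (rule tendsto_sum)
    fix x assume "x \<in> E"
    then obtain K L where x: "x = (K, L)" "K \<in> T" "L \<in> T" using Epair by (cases x) auto
    have "((\<lambda>\<epsilon>. (qKL V W T (rho_eps \<epsilon>) K L)\<^sup>2
                 * hh \<epsilon> (dens (rho_eps \<epsilon>) K) (dens (rho_eps \<epsilon>) L) (qKL V W T (rho_eps \<epsilon>) K L) * tau K L)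
        \<longlongrightarrow> (dens rho K * (max (qKL V W T rho K L) 0)\<^sup>2 + dens rho L * (max (- qKL V W T rho K L) 0)\<^sup>2) / 2 * tau K L) (at_right 0)"
      by (intro tendsto_mult_right hh_term_lim dlim x qlim)
    then show "((\<lambda>\<epsilon>. case x of (K, L) \<Rightarrow> (qKL V W T (rho_eps \<epsilon>) K L)\<^sup>2
                 * hh \<epsilon> (dens (rho_eps \<epsilon>) K) (dens (rho_eps \<epsilon>) L) (qKL V W T (rho_eps \<epsilon>) K L) * tau K L)
        \<longlongrightarrow> (case x of (K, L) \<Rightarrow> (dens rho K * (max (qKL V W T rho K L) 0)\<^sup>2 + dens rho L * (max (- qKL V W T rho K L) 0)\<^sup>2) / 2 * tau K L)) (at_right 0)"
      using x by simp
  qed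
  have eps: "((\<lambda>\<epsilon>::real. \<epsilon> / 2) \<longlongrightarrow> 0 / 2) (at_right 0)"
    by (intro tendsto_intros) auto
  have lim: "((\<lambda>\<epsilon>. D_eps \<epsilon> V W T (rho_eps \<epsilon>)) \<longlongrightarrow>
      2 * (\<Sum>x\<in>E. 0) + 0 / 2 * (\<Sum>(K, L)\<in>E. (dens rho L - dens rho K) * qKL V W T rho K L * tau K L)
      + 1 / 2 * (\<Sum>(K, L)\<in>E. (dens rho K * (max (qKL V W T rho K L) 0)\<^sup>2 + dens rho L * (max (- qKL V W T rho K L) 0)\<^sup>2) / 2 * tau K L)) (at_right 0)"
    unfolding D_eps_def E_def[symmetric]
    by (intro tendsto_add tendsto_mult tendsto_const S1 S2 S3 eps)
  have "2 * (\<Sum>x\<in>E. 0) + 0 / 2 * (\<Sum>(K, L)\<in>E. (dens rho L - dens rho K) * qKL V W T rho K L * tau K L)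
      + 1 / 2 * (\<Sum>(K, L)\<in>E. (dens rho K * (max (qKL V W T rho K L) 0)\<^sup>2 + dens rho L * (max (- qKL V W T rho K L) 0)\<^sup>2) / 2 * tau K L)
      = D_up V W T rho"
    unfolding D_up_def E_def[symmetric] sum_distrib_left
    by (simp add: alpha0_half case_prod_unfold)
  then show ?thesis using lim by simp
qed


end
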